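(* For every $n\ge2$ there is a locally finite variety which is $n$-Gumm but not $(n-1)$-Gumm, and there is a locally finite variety which is $n$-directed-distributive but not $(n-1)$-directed-distributive. For every $n\ge4$ there is a locally finite variety which is $n$-directed with alvin heads (in particular two-headed $n$-directed Gumm) but is neither $(n-1)$-directed with alvin heads nor two-headed $(n-1)$-directed Gumm.
   Context: Gumm terms: ternary $t_0,\dots,t_n$ with $t_0(x,y,z)=x$, $t_n(x,y,z)=z$, $t_h(x,y,x)=x$ for $2\le h\le n$ (not required for $h=1$), $t_h(x,z,z)=t_{h+1}(x,z,z)$ for even $h$ and $t_h(x,x,z)=t_{h+1}(x,x,z)$ for odd $h$ ($0\le h<n$); $n$-Gumm means having such $t_0,\dots,t_n$. Directed J\'onsson terms: $t_0(x,y,z)=x$, $t_n(x,y,z)=z$, $t_h(x,y,x)=x$ for all $h$, $t_h(x,z,z)=t_{h+1}(x,x,z)$ for $0\le h<n$; $n$-directed-distributive means having such $t_0,\dots,t_n$. For $k\ge4$, two-headed $k$-directed Gumm terms are ternary $p,t_2,\dots,t_{k-2},q$ with $t_h(x,y,x)=x$ ($2\le h\le k-2$), $p(x,z,z)=x$, $p(x,x,z)=t_2(x,x,z)$, $t_h(x,z,z)=t_{h+1}(x,x,z)$ ($2\le h<k-2$), $t_{k-2}(x,z,z)=q(x,z,z)$, $q(x,x,z)=z$; a variety with such terms is two-headed $k$-directed Gumm, and if moreover $p(x,y,x)=x=q(x,y,x)$ it is $k$-directed with alvin heads. These two notions are defined only for $k\ge4$ (so for $n=4$ the negative assertions are vacuous).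 *)

theory Defs
  imports Main
begin

text \<open>A signature is given by an arity function ar on operation symbols (nat).
Variables are indexed by nat; ternary terms use variables 0,1,2 (= x,y,z).\<close>

datatype trm = V nat | F nat "trm list"

fun wf :: "(nat \<Rightarrow> nat) \<Rightarrow> trm \<Rightarrow> bool" where
  "wf ar (V i) = True"
| "wf ar (F f ts) = (length ts = ar f \<and> (\<forall>t\<in>set ts. wf ar t))"

fun vars :: "trm \<Rightarrow> nat set" where
  "vars (V i) = {i}"
| "vars (F f ts) = (\<Union>t\<in>set ts. vars t)"

fun subst :: "(nat \<Rightarrow> trm) \<Rightarrow> trm \<Rightarrow> trm" where
  "subst \<sigma> (V i) = \<sigma> i"
| "subst \<sigma> (F f ts) = F f (map (subst \<sigma>) ts)"

text \<open>A variety is presented by a signature ar and a set Sigma of well-formed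
identities; it satisfies an identity iff the identity is derivable in
equational logic (Birkhoff's completeness theorem).\<close>

definition variety :: "(nat \<Rightarrow> nat) \<Rightarrow> (trm \<times> trm) set \<Rightarrow> bool" where
  "variety ar \<Sigma> \<longleftrightarrow> (\<forall>(s,t)\<in>\<Sigma>. wf ar s \<and> wf ar t)"

inductive deriv :: "(nat \<Rightarrow> nat) \<Rightarrow> (trm \<times> trm) set \<Rightarrow> trm \<Rightarrow> trm \<Rightarrow> bool"
  for ar \<Sigma> where
  ax: "(s, t) \<in> \<Sigma> \<Longrightarrow> deriv ar \<Sigma> s t"
| refl: "wf ar t \<Longrightarrow> deriv ar \<Sigma> t t"
| sym: "deriv ar \<Sigma> s t \<Longrightarrow> deriv ar \<Sigma> t s"
| trans: "deriv ar \<Sigma> s t \<Longrightarrow> deriv ar \<Sigma> t u \<Longrightarrow> deriv ar \<Sigma> s u"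
| cong: "length ss = ar f \<Longrightarrow> list_all2 (deriv ar \<Sigma>) ss ts \<Longrightarrow>
         deriv ar \<Sigma> (F f ss) (F f ts)"
| inst: "deriv ar \<Sigma> s t \<Longrightarrow> (\<forall>i. wf ar (\<sigma> i)) \<Longrightarrow>
         deriv ar \<Sigma> (subst \<sigma> s) (subst \<sigma> t)"

definition locally_finite :: "(nat \<Rightarrow> nat) \<Rightarrow> (trm \<times> trm) set \<Rightarrow> bool" where
  "locally_finite ar \<Sigma> \<longleftrightarrow>
     (\<forall>k. finite ({t. wf ar t \<and> vars t \<subseteq> {..<k}} // {(s, t). deriv ar \<Sigma> s t}))"

definition ternary :: "(nat \<Rightarrow> nat) \<Rightarrow> trm \<Rightarrow> bool" where
  "ternary ar t \<longleftrightarrow> wf ar t \<and> vars t \<subseteq> {0, 1, 2}"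

definition app3 :: "trm \<Rightarrow> trm \<Rightarrow> trm \<Rightarrow> trm \<Rightarrow> trm" where
  "app3 t a b c = subst (\<lambda>i. if i = 0 then a else if i = 1 then b else if i = 2 then c else V i) t"

abbreviation "vx \<equiv> V 0"
abbreviation "vy \<equiv> V 1"
abbreviation "vz \<equiv> V 2"

definition gumm :: "(nat \<Rightarrow> nat) \<Rightarrow> (trm \<times> trm) set \<Rightarrow> nat \<Rightarrow> bool" where
  "gumm ar \<Sigma> n \<longleftrightarrow> (\<exists>t :: nat \<Rightarrow> trm.
     (\<forall>h\<le>n. ternary ar (t h))
   \<and> deriv ar \<Sigma> (app3 (t 0) vx vy vz) vx
   \<and> deriv ar \<Sigma> (app3 (t n) vx vy vz) vz
   \<and> (\<forall>h. 2 \<le> h \<and> h \<le> n \<longrightarrow> deriv ar \<Sigma> (app3 (t h) vx vy vx) vx)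
   \<and> (\<forall>h<n. even h \<longrightarrow> deriv ar \<Sigma> (app3 (t h) vx vz vz) (app3 (t (Suc h)) vx vz vz))
   \<and> (\<forall>h<n. odd h \<longrightarrow> deriv ar \<Sigma> (app3 (t h) vx vx vz) (app3 (t (Suc h)) vx vx vz)))"

definition directed_distributive :: "(nat \<Rightarrow> nat) \<Rightarrow> (trm \<times> trm) set \<Rightarrow> nat \<Rightarrow> bool" where
  "directed_distributive ar \<Sigma> n \<longleftrightarrow> (\<exists>t :: nat \<Rightarrow> trm.
     (\<forall>h\<le>n. ternary ar (t h))
   \<and> deriv ar \<Sigma> (app3 (t 0) vx vy vz) vx
   \<and> deriv ar \<Sigma> (app3 (t n) vx vy vz) vz
   \<and> (\<forall>h\<le>n. deriv ar \<Sigma> (app3 (t h) vx vy vx) vx)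
   \<and> (\<forall>h<n. deriv ar \<Sigma> (app3 (t h) vx vz vz) (app3 (t (Suc h)) vx vx vz)))"

definition two_headed_gumm_terms ::
    "(nat \<Rightarrow> nat) \<Rightarrow> (trm \<times> trm) set \<Rightarrow> nat \<Rightarrow> trm \<Rightarrow> (nat \<Rightarrow> trm) \<Rightarrow> trm \<Rightarrow> bool" where
  "two_headed_gumm_terms ar \<Sigma> k p t q \<longleftrightarrow>
     ternary ar p \<and> ternary ar q \<and> (\<forall>h. 2 \<le> h \<and> h \<le> k - 2 \<longrightarrow> ternary ar (t h))
   \<and> (\<forall>h. 2 \<le> h \<and> h \<le> k - 2 \<longrightarrow> deriv ar \<Sigma> (app3 (t h) vx vy vx) vx)
   \<and> deriv ar \<Sigma> (app3 p vx vz vz) vx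
   \<and> deriv ar \<Sigma> (app3 p vx vx vz) (app3 (t 2) vx vx vz)
   \<and> (\<forall>h. 2 \<le> h \<and> h < k - 2 \<longrightarrow> deriv ar \<Sigma> (app3 (t h) vx vz vz) (app3 (t (Suc h)) vx vx vz))
   \<and> deriv ar \<Sigma> (app3 (t (k - 2)) vx vz vz) (app3 q vx vz vz)
   \<and> deriv ar \<Sigma> (app3 q vx vx vz) vz"

definition two_headed_directed_gumm :: "(nat \<Rightarrow> nat) \<Rightarrow> (trm \<times> trm) set \<Rightarrow> nat \<Rightarrow> bool" where
  "two_headed_directed_gumm ar \<Sigma> k \<longleftrightarrow> 4 \<le> k \<and> (\<exists>p t q. two_headed_gumm_terms ar \<Sigma> k p t q)"

definition directed_alvin_heads :: "(nat \<Rightarrow> nat) \<Rightarrow> (trm \<times> trm) set \<Rightarrow> nat \<Rightarrow> bool" where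
  "directed_alvin_heads ar \<Sigma> k \<longleftrightarrow> 4 \<le> k \<and> (\<exists>p t q. two_headed_gumm_terms ar \<Sigma> k p t q
     \<and> deriv ar \<Sigma> (app3 p vx vy vx) vx \<and> deriv ar \<Sigma> (app3 q vx vy vx) vx)"

end

theory Submission
  imports Defs "HOL-Library.FuncSet"
begin


fun ev :: "(nat \<Rightarrow> nat list \<Rightarrow> nat) \<Rightarrow> (nat \<Rightarrow> nat) \<Rightarrow> trm \<Rightarrow> nat" where
  "ev I \<rho> (V i) = \<rho> i"
| "ev I \<rho> (F f ts) = I f (map (ev I \<rho>) ts)"

definition Th :: "(nat \<Rightarrow> nat) \<Rightarrow> (nat \<Rightarrow> nat list \<Rightarrow> nat) \<Rightarrow> nat \<Rightarrow> (trm \<times> trm) set" where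
  "Th ar I N = {(s,t). wf ar s \<and> wf ar t \<and> (\<forall>\<rho>. (\<forall>i. \<rho> i \<le> N) \<longrightarrow> ev I \<rho> s = ev I \<rho> t)}"

definition clo :: "(nat \<Rightarrow> nat) \<Rightarrow> (nat \<Rightarrow> nat list \<Rightarrow> nat) \<Rightarrow> nat \<Rightarrow> bool" where
  "clo ar I N \<longleftrightarrow> (\<forall>f xs. length xs = ar f \<longrightarrow> (\<forall>x\<in>set xs. x \<le> N) \<longrightarrow> I f xs \<le> N)"

lemma ev_subst: "ev I \<rho> (subst \<sigma> t) = ev I (\<lambda>i. ev I \<rho> (\<sigma> i)) t"
  by (induction t) (simp_all cong: map_cong)

lemma wf_subst: "wf ar t \<Longrightarrow> (\<forall>i. wf ar (\<sigma> i)) \<Longrightarrow> wf ar (subst \<sigma> t)"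
  by (induction t) auto

lemma ev_vars: "(\<forall>i\<in>vars t. \<rho> i = \<rho>' i) \<Longrightarrow> ev I \<rho> t = ev I \<rho>' t"
  by (induction t) (simp_all cong: map_cong)

lemma ev_bound: "clo ar I N \<Longrightarrow> wf ar t \<Longrightarrow> (\<forall>i. \<rho> i \<le> N) \<Longrightarrow> ev I \<rho> t \<le> N"
  by (induction t) (auto simp: clo_def)

lemma sound:
  assumes c: "clo ar I N"
  shows "deriv ar (Th ar I N) s t \<Longrightarrow> wf ar s \<and> wf ar t \<and> (\<forall>\<rho>. (\<forall>i. \<rho> i \<le> N) \<longrightarrow> ev I \<rho> s = ev I \<rho> t)"
proof (induction rule: deriv.induct)
  case (ax s t) then show ?case by (auto simp: Th_def)
next
  case (refl t) then show ?case by auto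
next
  case (sym s t) then show ?case by auto
next
  case (trans s t u) then show ?case by auto
next
  case (cong ss f ts)
  have len: "length ts = length ss" using cong(2) by (simp add: list_all2_lengthD)
  have nth: "\<And>i. i < length ss \<Longrightarrow> wf ar (ss!i) \<and> wf ar (ts!i) \<and>
      (\<forall>\<rho>. (\<forall>i. \<rho> i \<le> N) \<longrightarrow> ev I \<rho> (ss!i) = ev I \<rho> (ts!i))"
    using cong(2) by (auto simp: list_all2_conv_all_nth)
  have "\<forall>t\<in>set ss. wf ar t" using nth by (auto simp: in_set_conv_nth)
  moreover have "\<forall>t\<in>set ts. wf ar t" using nth len by (auto simp: in_set_conv_nth)
  moreover have "\<forall>\<rho>. (\<forall>i. \<rho> i \<le> N) \<longrightarrow> map (ev I \<rho>) ss = map (ev I \<rho>) ts"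
    using nth len by (auto intro!: nth_equalityI)
  ultimately show ?case using cong(1) len by auto
next
  case (inst s t \<sigma>)
  have b: "\<forall>\<rho>. (\<forall>i. \<rho> i \<le> N) \<longrightarrow> (\<forall>i. ev I \<rho> (\<sigma> i) \<le> N)"
    using ev_bound[OF c] inst(2) by blast
  show ?case using inst b by (auto simp: ev_subst intro!: wf_subst)
qed

lemma variety_Th: "variety ar (Th ar I N)"
  by (auto simp: variety_def Th_def)

lemma deriv_iff: assumes "clo ar I N"
  shows "deriv ar (Th ar I N) s t \<longleftrightarrow> wf ar s \<and> wf ar t \<and> (\<forall>\<rho>. (\<forall>i. \<rho> i \<le> N) \<longrightarrow> ev I \<rho> s = ev I \<rho> t)"
proof
  assume "deriv ar (Th ar I N) s t" then show "wf ar s \<and> wf ar t \<and> (\<forall>\<rho>. (\<forall>i. \<rho> i \<le> N) \<longrightarrow> ev I \<rho> s = ev I \<rho> t)"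
    using sound[OF assms] by blast
next
  assume "wf ar s \<and> wf ar t \<and> (\<forall>\<rho>. (\<forall>i. \<rho> i \<le> N) \<longrightarrow> ev I \<rho> s = ev I \<rho> t)"
  then have "(s, t) \<in> Th ar I N" by (simp add: Th_def)
  then show "deriv ar (Th ar I N) s t" by (rule deriv.ax)
qed

lemma finite_factor:
  assumes "finite (f ` A)" "\<And>x y. x \<in> A \<Longrightarrow> y \<in> A \<Longrightarrow> f x = f y \<Longrightarrow> g x = g y"
  shows "finite (g ` A)"
proof -
  have "g ` A \<subseteq> (\<lambda>v. g (SOME x. x \<in> A \<and> f x = v)) ` (f ` A)"
  proof
    fix y assume "y \<in> g ` A"
    then obtain x where x: "x \<in> A" "y = g x" by auto
    have "\<exists>x'. x' \<in> A \<and> f x' = f x" using x by auto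
    then have "(SOME x'. x' \<in> A \<and> f x' = f x) \<in> A \<and> f (SOME x'. x' \<in> A \<and> f x' = f x) = f x"
      by (rule someI_ex)
    then have eq: "g (SOME x'. x' \<in> A \<and> f x' = f x) = g x" using assms(2) x by metis
    show "y \<in> (\<lambda>v. g (SOME x. x \<in> A \<and> f x = v)) ` (f ` A)"
      by (rule image_eqI[where x="f x"]) (use x eq in auto)
  qed
  then show ?thesis using assms(1) finite_subset by blast
qed

lemma lf_Th: assumes c: "clo ar I N" shows "locally_finite ar (Th ar I N)"
  unfolding locally_finite_def
proof
  fix k
  define W where "W = {t. wf ar t \<and> vars t \<subseteq> {..<k}}"
  define r where "r = {(s, t). deriv ar (Th ar I N) s t}"
  define L where "L = {xs. set xs \<subseteq> {..N} \<and> length xs = k}"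
  define as where "as = (\<lambda>xs i. if i < k then xs ! i else (0::nat))"
  define \<phi> where "\<phi> = (\<lambda>s. restrict (\<lambda>xs. ev I (as xs) s) L)"
  have fL: "finite L" unfolding L_def by (rule finite_lists_length_eq) simp
  have asb: "\<forall>i. as xs i \<le> N" if "xs \<in> L" for xs
    using that by (auto simp: as_def L_def nth_mem subset_iff)
  have sub: "\<phi> ` W \<subseteq> PiE L (\<lambda>_. {..N})"
  proof
    fix y assume "y \<in> \<phi> ` W"
    then obtain s where s: "s \<in> W" "y = \<phi> s" by auto
    have "\<And>xs. xs \<in> L \<Longrightarrow> ev I (as xs) s \<in> {..N}"
      using ev_bound[OF c] asb s(1) unfolding W_def by blast
    then show "y \<in> PiE L (\<lambda>_. {..N})" using s(2) unfolding \<phi>_def by (simp add: restrict_PiE_iff)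
  qed
  have f1: "finite (\<phi> ` W)"
    using sub finite_PiE[OF fL, of "\<lambda>_. {..N}"] finite_subset by blast
  have key: "r `` {s} = r `` {s'}" if sW: "s \<in> W" and s'W: "s' \<in> W" and eqp: "\<phi> s = \<phi> s'" for s s'
  proof -
    have "ev I \<rho> s = ev I \<rho> s'" if b: "\<forall>i. \<rho> i \<le> N" for \<rho>
    proof -
      define xs where "xs = map \<rho> [0..<k]"
      have xL: "xs \<in> L" using b by (auto simp: xs_def L_def)
      have e1: "ev I \<rho> s = ev I (as xs) s"
        using \<open>s \<in> W\<close> by (intro ev_vars) (auto simp: W_def as_def xs_def)
      have e2: "ev I \<rho> s' = ev I (as xs) s'"
        using \<open>s' \<in> W\<close> by (intro ev_vars) (auto simp: W_def as_def xs_def)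
      have "\<phi> s xs = \<phi> s' xs" using eqp by simp
      then show ?thesis using e1 e2 xL by (simp add: \<phi>_def)
    qed
    then have "\<And>t. deriv ar (Th ar I N) s t \<longleftrightarrow> deriv ar (Th ar I N) s' t"
      using sW s'W unfolding deriv_iff[OF c] W_def by auto
    then show ?thesis unfolding r_def by auto
  qed
  have "finite ((\<lambda>s. r `` {s}) ` W)" by (rule finite_factor[OF f1 key])
  moreover have "W // r = (\<lambda>s. r `` {s}) ` W" by (auto simp: quotient_def)
  ultimately show "finite ({t. wf ar t \<and> vars t \<subseteq> {..<k}} // {(s, t). deriv ar (Th ar I N) s t})"
    by (simp add: W_def r_def)
qed

lemma pres_term:
  assumes pres: "\<And>f (xs :: (nat \<Rightarrow> nat) list). length xs = ar f \<Longrightarrow> (\<forall>x\<in>set xs. Q x) \<Longrightarrow> Q (\<lambda>j. I f (map (\<lambda>x. x j) xs))"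
  shows "wf ar t \<Longrightarrow> (\<forall>i. Q (\<lambda>j. \<rho> j i)) \<Longrightarrow> Q (\<lambda>j. ev I (\<rho> j) t)"
proof (induction t)
  case (V i) then show ?case by simp
next
  case (F f ts)
  have "Q (\<lambda>j. I f (map (\<lambda>x. x j) (map (\<lambda>t j. ev I (\<rho> j) t) ts)))"
    using F by (intro pres) auto
  then show ?case by (simp add: comp_def)
qed



definition pp :: "nat \<Rightarrow> nat \<Rightarrow> nat \<Rightarrow> nat \<Rightarrow> nat" where
 "pp N k x z = (if x \<le> z then max x (min z k) else min x (max z (N - k)))"
definition op :: "nat \<Rightarrow> nat \<Rightarrow> nat \<Rightarrow> nat \<Rightarrow> nat \<Rightarrow> nat \<Rightarrow> nat" where
 "op N a b x y z = (if x = z then x else if y = z then pp N a x z else pp N b x z)"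
definition opI :: "nat \<Rightarrow> (nat \<Rightarrow> nat) \<Rightarrow> (nat \<Rightarrow> nat) \<Rightarrow> nat \<Rightarrow> nat list \<Rightarrow> nat" where
 "opI N A B f xs = op N (A f) (B f) (xs!0) (xs!1) (xs!2)"

lemma op_pp: "op N a b x y z = pp N (if y = z then a else b) x z"
  by (simp add: op_def pp_def)
lemma pp_le: "x \<le> N \<Longrightarrow> z \<le> N \<Longrightarrow> pp N k x z \<le> N"
  by (auto simp: pp_def)
lemma op_le: "x \<le> N \<Longrightarrow> z \<le> N \<Longrightarrow> op N a b x y z \<le> N"
  by (simp add: op_pp pp_le)
lemma op_xyx[simp]: "op N a b x y x = x" by (simp add: op_def)
lemma op_xzz: "op N a b x z z = pp N a x z" by (simp add: op_pp)
lemma op_xxz: "op N a b x x z = pp N b x z" by (simp add: op_def pp_def)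
lemma pp_0: "x \<le> N \<Longrightarrow> pp N 0 x z = x" by (auto simp: pp_def)
lemma pp_N: "z \<le> N \<Longrightarrow> N \<le> k \<Longrightarrow> pp N k x z = z" by (auto simp: pp_def)

lemma clo_opI: "clo (\<lambda>_. 3) (opI N A B) N"
  unfolding clo_def opI_def
proof (intro allI impI)
  fix f :: nat and xs :: "nat list"
  assume "length xs = 3" "\<forall>x\<in>set xs. x \<le> N"
  then have "xs!0 \<le> N" "xs!2 \<le> N" by (auto simp: nth_mem)
  then show "op N (A f) (B f) (xs ! 0) (xs ! 1) (xs ! 2) \<le> N" by (rule op_le)
qed

lemma pp_zero: "pp N k x z = 0 \<Longrightarrow> (x = 0 \<and> z = 0) \<or> (x = 0 \<and> k = 0) \<or> (z = 0 \<and> N \<le> k)"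
  by (auto simp: pp_def split: if_splits)

lemma C1: assumes "x \<le> x' + 1" "x' \<le> x + 1" "z \<le> z' + 1" "z' \<le> z + 1" "\<alpha> \<le> \<beta> + 1" "\<beta> \<le> \<alpha> + 1"
  "x \<le> N" "z \<le> N" "x' \<le> N" "z' \<le> N"
  shows "pp N \<alpha> x z \<le> pp N \<beta> x' z' + 1"
  using assms unfolding pp_def by (auto split: if_splits)
lemma C2: assumes "x \<le> x' + 1" "x' \<le> x + 1" "\<alpha> \<le> 1" "\<beta> \<le> 1"
  "x \<le> N" "z \<le> N" "x' \<le> N" "z' \<le> N"
  shows "pp N \<alpha> x z \<le> pp N \<beta> x' z' + 1"
  using assms unfolding pp_def by (auto split: if_splits)
lemma C3: assumes "z \<le> z' + 1" "z' \<le> z + 1" "N \<le> \<alpha> + 1" "N \<le> \<beta> + 1"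
  "x \<le> N" "z \<le> N" "x' \<le> N" "z' \<le> N"
  shows "pp N \<alpha> x z \<le> pp N \<beta> x' z' + 1"
  using assms unfolding pp_def by (auto split: if_splits)

lemma LM: assumes "a \<le> b + 1" "b \<le> a + 1" "q1 \<le> p1 + 1" "q2 \<le> p2 + 1" "q3 \<le> p3 + 1"
  "p1 \<le> N" "p2 \<le> N" "p3 \<le> N" "q1 \<le> N" "q2 \<le> N" "q3 \<le> N"
  shows "op N a b q1 q2 q3 \<le> op N a b p1 p2 p3 + 1"
  using assms unfolding op_def pp_def by (auto split: if_splits)

lemma LR1: assumes ab: "a \<le> b + 1" "b \<le> a + 1" and z: "op N a b p1 p2 p3 = 0"
  and h1: "p1 = 0 \<Longrightarrow> u1 \<le> v1 + 1 \<and> v1 \<le> u1 + 1"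
  and h3: "p3 = 0 \<Longrightarrow> u3 \<le> v3 + 1 \<and> v3 \<le> u3 + 1"
  and bd: "u1 \<le> N" "u3 \<le> N" "v1 \<le> N" "v3 \<le> N"
  shows "op N a b u1 u2 u3 \<le> op N a b v1 v2 v3 + 1"
proof -
  define k where "k = (if p2 = p3 then a else b)"
  define \<alpha> where "\<alpha> = (if u2 = u3 then a else b)"
  define \<beta> where "\<beta> = (if v2 = v3 then a else b)"
  have ab': "\<alpha> \<le> \<beta> + 1" "\<beta> \<le> \<alpha> + 1" using ab by (auto simp: \<alpha>_def \<beta>_def)
  have "pp N k p1 p3 = 0" using z by (simp add: op_pp k_def)
  then have cs: "(p1 = 0 \<and> p3 = 0) \<or> (p1 = 0 \<and> k = 0) \<or> (p3 = 0 \<and> N \<le> k)" by (rule pp_zero)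
  have "pp N \<alpha> u1 u3 \<le> pp N \<beta> v1 v3 + 1"
  proof -
    { assume "p1 = 0 \<and> p3 = 0"
      then have ?thesis using h1 h3 ab' bd by (intro C1) auto }
    moreover
    { assume c: "p1 = 0 \<and> k = 0"
      then have "a = 0 \<or> b = 0" by (auto simp: k_def split: if_splits)
      then have "\<alpha> \<le> 1" "\<beta> \<le> 1" using ab by (auto simp: \<alpha>_def \<beta>_def)
      then have ?thesis using h1 c bd by (intro C2) auto }
    moreover
    { assume c: "p3 = 0 \<and> N \<le> k"
      then have "N \<le> a \<or> N \<le> b" by (auto simp: k_def split: if_splits)
      then have "N \<le> \<alpha> + 1" "N \<le> \<beta> + 1" using ab by (auto simp: \<alpha>_def \<beta>_def)
      then have ?thesis using h3 c bd by (intro C3) auto }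
    ultimately show ?thesis using cs by blast
  qed
  then show ?thesis by (simp add: op_pp \<alpha>_def \<beta>_def)
qed

definition QR :: "nat \<Rightarrow> (nat \<Rightarrow> nat) \<Rightarrow> bool" where
  "QR N g \<longleftrightarrow> g 0 \<le> N \<and> g 1 \<le> N \<and> g 2 \<le> N \<and> (g 0 = 0 \<longrightarrow> g 1 \<le> g 2 + 1 \<and> g 2 \<le> g 1 + 1)"
definition QM :: "nat \<Rightarrow> (nat \<Rightarrow> nat) \<Rightarrow> bool" where
  "QM N g \<longleftrightarrow> g 0 \<le> N \<and> g 1 \<le> N \<and> g 1 \<le> g 0 + 1"

definition close :: "(nat \<Rightarrow> nat) \<Rightarrow> (nat \<Rightarrow> nat) \<Rightarrow> bool" where
  "close A B \<longleftrightarrow> (\<forall>f. A f \<le> B f + 1 \<and> B f \<le> A f + 1)"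

lemma len3: "length xs = 3 \<Longrightarrow> \<exists>x1 x2 x3. xs = [x1, x2, x3]"
  by (auto simp: numeral_3_eq_3 length_Suc_conv)

lemma presR: assumes cl: "close A B"
  shows "length xs = (\<lambda>_. 3::nat) f \<Longrightarrow> \<forall>x\<in>set xs. QR N x \<Longrightarrow> QR N (\<lambda>j. opI N A B f (map (\<lambda>x. x j) xs))"
proof -
  assume l: "length xs = (\<lambda>_. 3::nat) f" and q: "\<forall>x\<in>set xs. QR N x"
  obtain x1 x2 x3 where xs: "xs = [x1, x2, x3]" using len3[of xs] l by blast
  have q1: "QR N x1" and q2: "QR N x2" and q3: "QR N x3" using q xs by auto
  have ab: "A f \<le> B f + 1" "B f \<le> A f + 1" using cl by (auto simp: close_def)
  let ?o = "op N (A f) (B f)"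
  have b: "x1 0 \<le> N" "x1 1 \<le> N" "x1 2 \<le> N" "x3 0 \<le> N" "x3 1 \<le> N" "x3 2 \<le> N"
    using q1 q3 by (auto simp: QR_def)
  have "?o (x1 0) (x2 0) (x3 0) = 0 \<Longrightarrow> ?o (x1 1) (x2 1) (x3 1) \<le> ?o (x1 2) (x2 2) (x3 2) + 1"
    by (rule LR1[OF ab]) (use q1 q3 b in \<open>auto simp: QR_def\<close>)
  moreover have "?o (x1 0) (x2 0) (x3 0) = 0 \<Longrightarrow> ?o (x1 2) (x2 2) (x3 2) \<le> ?o (x1 1) (x2 1) (x3 1) + 1"
    by (rule LR1[OF ab]) (use q1 q3 b in \<open>auto simp: QR_def\<close>)
  moreover have "?o (x1 i) (x2 i) (x3 i) \<le> N" if "i \<le> 2" for i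
    using b that by (intro op_le) (auto simp: le_Suc_eq numeral_2_eq_2)
  ultimately show ?thesis by (simp add: xs opI_def QR_def)
qed

lemma presM: assumes cl: "close A B"
  shows "length xs = (\<lambda>_. 3::nat) f \<Longrightarrow> \<forall>x\<in>set xs. QM N x \<Longrightarrow> QM N (\<lambda>j. opI N A B f (map (\<lambda>x. x j) xs))"
proof -
  assume l: "length xs = (\<lambda>_. 3::nat) f" and q: "\<forall>x\<in>set xs. QM N x"
  obtain x1 x2 x3 where xs: "xs = [x1, x2, x3]" using len3[of xs] l by blast
  have q1: "QM N x1" and q2: "QM N x2" and q3: "QM N x3" using q xs by auto
  have ab: "A f \<le> B f + 1" "B f \<le> A f + 1" using cl by (auto simp: close_def)
  let ?o = "op N (A f) (B f)"
  have "?o (x1 1) (x2 1) (x3 1) \<le> ?o (x1 0) (x2 0) (x3 0) + 1"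
    by (rule LM[OF ab]) (use q1 q2 q3 in \<open>auto simp: QM_def\<close>)
  moreover have "?o (x1 0) (x2 0) (x3 0) \<le> N" "?o (x1 1) (x2 1) (x3 1) \<le> N"
    using q1 q3 by (auto intro!: op_le simp: QM_def)
  ultimately show ?thesis by (simp add: xs opI_def QM_def)
qed



definition r3 :: "nat \<Rightarrow> nat \<Rightarrow> nat \<Rightarrow> nat \<Rightarrow> nat" where
  "r3 x y z = (\<lambda>i. if i = 0 then x else if i = 1 then y else if i = 2 then z else 0)"

lemma r3_simps[simp]: "r3 x y z 0 = x" "r3 x y z 1 = y" "r3 x y z (Suc 0) = y" "r3 x y z 2 = z"
  by (auto simp: r3_def)

lemma r3_bound: "x \<le> N \<Longrightarrow> y \<le> N \<Longrightarrow> z \<le> N \<Longrightarrow> \<forall>i. r3 x y z i \<le> N"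
  by (auto simp: r3_def)

lemma ev_app3V[simp]: "ev I (r3 x y z) (app3 t (V i) (V j) (V l)) = ev I (r3 (r3 x y z i) (r3 x y z j) (r3 x y z l)) t"
  unfolding app3_def ev_subst by (rule arg_cong[where f="\<lambda>\<rho>. ev I \<rho> t"]) (auto simp: r3_def)

abbreviation ar3 :: "nat \<Rightarrow> nat" where "ar3 \<equiv> (\<lambda>_. 3)"

lemma sem_eq: assumes "deriv ar3 (Th ar3 (opI N A B) N) s t" "x \<le> N" "y \<le> N" "z \<le> N"
  shows "ev (opI N A B) (r3 x y z) s = ev (opI N A B) (r3 x y z) t"
  using sound[OF clo_opI assms(1)] r3_bound[OF assms(2-4)] by blast

lemma edgeR: assumes cl: "close A B" and N: "1 \<le> N" and w: "wf ar3 t"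
  and a: "ev (opI N A B) (r3 0 N 0) t = 0"
  shows "ev (opI N A B) (r3 0 N N) t \<le> ev (opI N A B) (r3 0 0 N) t + 1"
proof -
  define \<rho> where "\<rho> = (\<lambda>j::nat. r3 0 (if j = 1 then 0 else N) (if j = 0 then 0 else N))"
  have "QR N (\<lambda>j. ev (opI N A B) (\<rho> j) t)"
  proof (rule pres_term[where Q="QR N"])
    show "wf ar3 t" by fact
    show "\<forall>i. QR N (\<lambda>j. \<rho> j i)" using N by (auto simp: QR_def \<rho>_def r3_def)
    show "\<And>f xs. length xs = ar3 f \<Longrightarrow> \<forall>x\<in>set xs. QR N x \<Longrightarrow> QR N (\<lambda>j. opI N A B f (map (\<lambda>x. x j) xs))"
      using presR[OF cl] by blast
  qed
  then show ?thesis using a by (simp add: QR_def \<rho>_def)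
qed

lemma edgeM: assumes cl: "close A B" and w: "wf ar3 t"
  shows "ev (opI N A B) (r3 0 0 N) t \<le> ev (opI N A B) (r3 0 N N) t + 1"
proof -
  define \<rho> where "\<rho> = (\<lambda>j::nat. r3 0 (if j = 0 then N else 0) N)"
  have "QM N (\<lambda>j. ev (opI N A B) (\<rho> j) t)"
  proof (rule pres_term[where Q="QM N"])
    show "wf ar3 t" by fact
    show "\<forall>i. QM N (\<lambda>j. \<rho> j i)" by (auto simp: QM_def \<rho>_def r3_def)
    show "\<And>f xs. length xs = ar3 f \<Longrightarrow> \<forall>x\<in>set xs. QM N x \<Longrightarrow> QM N (\<lambda>j. opI N A B f (map (\<lambda>x. x j) xs))"
      using presM[OF cl] by blast
  qed
  then show ?thesis by (simp add: QM_def \<rho>_def)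
qed

lemma dd_neg: assumes cl: "close A B" and N: "1 \<le> N"
  shows "\<not> directed_distributive ar3 (Th ar3 (opI N A B) N) N"
proof
  let ?I = "opI N A B" and ?T = "Th ar3 (opI N A B) N"
  assume "directed_distributive ar3 ?T N"
  then obtain s where tern: "\<forall>h\<le>N. ternary ar3 (s h)"
    and h0: "deriv ar3 ?T (app3 (s 0) vx vy vz) vx"
    and hN: "deriv ar3 ?T (app3 (s N) vx vy vz) vz"
    and ab: "\<forall>h\<le>N. deriv ar3 ?T (app3 (s h) vx vy vx) vx"
    and ch: "\<forall>h<N. deriv ar3 ?T (app3 (s h) vx vz vz) (app3 (s (Suc h)) vx vx vz)"
    unfolding directed_distributive_def by blast
  define w where "w h = ev ?I (r3 0 0 N) (s h)" for h
  define v where "v h = ev ?I (r3 0 N N) (s h)" for h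
  have v0: "v 0 = 0" using sem_eq[OF h0, where x=0 and y=N and z=N] by (simp add: v_def)
  have wN: "w N = N" using sem_eq[OF hN, where x=0 and y=0 and z=N] by (simp add: w_def)
  have st: "v h = w (Suc h)" if "h < N" for h
    using sem_eq[OF ch[rule_format, OF that], where x=0 and y=0 and z=N] by (simp add: v_def w_def)
  have ed: "v h \<le> w h + 1" if "h \<le> N" for h
  proof -
    have "ev ?I (r3 0 N 0) (s h) = 0"
      using sem_eq[OF ab[rule_format, OF that], where x=0 and y=N and z=0] by simp
    then show ?thesis unfolding v_def w_def
      using edgeR[OF cl N] tern that by (auto simp: ternary_def)
  qed
  have cl2: "1 \<le> h \<longrightarrow> h \<le> N \<longrightarrow> w h \<le> h - 1" for h
  proof (induction h)
    case 0 then show ?case by simp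
  next
    case (Suc h)
    show ?case
    proof (cases "h = 0")
      case True then show ?thesis using st[of 0] v0 by auto
    next
      case False then show ?thesis using Suc st[of h] ed[of h] by auto
    qed
  qed
  show False using cl2[of N] wN N by auto
qed

lemma gumm_neg: assumes cl: "close A B" and N: "1 \<le> N"
  shows "\<not> gumm ar3 (Th ar3 (opI N A B) N) N"
proof
  let ?I = "opI N A B" and ?T = "Th ar3 (opI N A B) N"
  assume "gumm ar3 ?T N"
  then obtain s where tern: "\<forall>h\<le>N. ternary ar3 (s h)"
    and h0: "deriv ar3 ?T (app3 (s 0) vx vy vz) vx"
    and hN: "deriv ar3 ?T (app3 (s N) vx vy vz) vz"
    and ab: "\<forall>h. 2 \<le> h \<and> h \<le> N \<longrightarrow> deriv ar3 ?T (app3 (s h) vx vy vx) vx"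
    and ev1: "\<forall>h<N. even h \<longrightarrow> deriv ar3 ?T (app3 (s h) vx vz vz) (app3 (s (Suc h)) vx vz vz)"
    and od1: "\<forall>h<N. odd h \<longrightarrow> deriv ar3 ?T (app3 (s h) vx vx vz) (app3 (s (Suc h)) vx vx vz)"
    unfolding gumm_def by blast
  define u where "u h = ev ?I (r3 0 0 N) (s h)" for h
  define v where "v h = ev ?I (r3 0 N N) (s h)" for h
  have v0: "v 0 = 0" using sem_eq[OF h0, where x=0 and y=N and z=N] by (simp add: v_def)
  have uN: "u N = N" using sem_eq[OF hN, where x=0 and y=0 and z=N] by (simp add: u_def)
  have vN: "v N = N" using sem_eq[OF hN, where x=0 and y=N and z=N] by (simp add: v_def)
  have se: "v h = v (Suc h)" if "h < N" "even h" for h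
    using sem_eq[OF ev1[rule_format, OF that], where x=0 and y=0 and z=N] by (simp add: v_def)
  have so: "u h = u (Suc h)" if "h < N" "odd h" for h
    using sem_eq[OF od1[rule_format, OF that], where x=0 and y=0 and z=N] by (simp add: u_def)
  have ed: "v h \<le> u h + 1 \<and> u h \<le> v h + 1" if "2 \<le> h" "h \<le> N" for h
  proof -
    have "ev ?I (r3 0 N 0) (s h) = 0"
      using sem_eq[OF ab[rule_format, OF conjI[OF that]], where x=0 and y=N and z=0] by simp
    moreover have "wf ar3 (s h)" using tern that by (auto simp: ternary_def)
    ultimately show ?thesis unfolding v_def u_def
      using edgeR[OF cl N] edgeM[OF cl] by auto
  qed
  have m1: "u 1 \<le> v 1 + 1" unfolding u_def v_def
    using edgeM[OF cl] tern N by (auto simp: ternary_def)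
  have cl2: "1 \<le> h \<longrightarrow> h \<le> N \<longrightarrow> u h \<le> h \<and> v h \<le> h \<and> (odd h \<longrightarrow> v h \<le> h - 1) \<and> (even h \<longrightarrow> u h \<le> h - 1)" for h
  proof (induction h)
    case 0 then show ?case by simp
  next
    case (Suc h)
    show ?case
    proof (cases "h = 0")
      case True then show ?thesis using se[of 0] v0 m1 by auto
    next
      case False
      show ?thesis
      proof (cases "odd h")
        case True then show ?thesis using Suc False so[of h] ed[of "Suc h"] by auto
      next
        case False2: False then show ?thesis using Suc False se[of h] ed[of "Suc h"] by auto
      qed
    qed
  qed
  show False using cl2[of N] uN vN N by (cases "odd N") auto
qed

lemma th_neg: assumes cl: "close A B"
  shows "\<not> two_headed_directed_gumm ar3 (Th ar3 (opI N A B) N) N"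
proof
  let ?I = "opI N A B" and ?T = "Th ar3 (opI N A B) N"
  assume "two_headed_directed_gumm ar3 ?T N"
  then obtain p t q where N: "4 \<le> N" and tt: "two_headed_gumm_terms ar3 ?T N p t q"
    unfolding two_headed_directed_gumm_def by blast
  have tp: "ternary ar3 p" and tq: "ternary ar3 q"
    and tt2: "\<forall>h. 2 \<le> h \<and> h \<le> N - 2 \<longrightarrow> ternary ar3 (t h)"
    and ab: "\<forall>h. 2 \<le> h \<and> h \<le> N - 2 \<longrightarrow> deriv ar3 ?T (app3 (t h) vx vy vx) vx"
    and p1: "deriv ar3 ?T (app3 p vx vz vz) vx"
    and p2: "deriv ar3 ?T (app3 p vx vx vz) (app3 (t 2) vx vx vz)"
    and ch: "\<forall>h. 2 \<le> h \<and> h < N - 2 \<longrightarrow> deriv ar3 ?T (app3 (t h) vx vz vz) (app3 (t (Suc h)) vx vx vz)"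
    and q1: "deriv ar3 ?T (app3 (t (N - 2)) vx vz vz) (app3 q vx vz vz)"
    and q2: "deriv ar3 ?T (app3 q vx vx vz) vz"
    using tt unfolding two_headed_gumm_terms_def by blast+
  define u where "u h = ev ?I (r3 0 0 N) (t h)" for h
  define v where "v h = ev ?I (r3 0 N N) (t h)" for h
  have N1: "1 \<le> N" using N by simp
  have pa: "ev ?I (r3 0 N N) p = 0" using sem_eq[OF p1, where x=0 and y=N and z=N] by simp
  have pb: "ev ?I (r3 0 0 N) p = u 2" using sem_eq[OF p2, where x=0 and y=0 and z=N] by (simp add: u_def)
  have pm: "ev ?I (r3 0 0 N) p \<le> ev ?I (r3 0 N N) p + 1"
    using edgeM[OF cl] tp by (auto simp: ternary_def)
  have qa: "v (N - 2) = ev ?I (r3 0 N N) q" using sem_eq[OF q1, where x=0 and y=0 and z=N] by (simp add: v_def)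
  have qb: "ev ?I (r3 0 0 N) q = N" using sem_eq[OF q2, where x=0 and y=0 and z=N] by simp
  have qm: "ev ?I (r3 0 0 N) q \<le> ev ?I (r3 0 N N) q + 1"
    using edgeM[OF cl] tq by (auto simp: ternary_def)
  have st: "v h = u (Suc h)" if "2 \<le> h" "h < N - 2" for h
    using sem_eq[OF ch[rule_format, OF conjI[OF that]], where x=0 and y=0 and z=N] by (simp add: v_def u_def)
  have ed: "v h \<le> u h + 1" if "2 \<le> h" "h \<le> N - 2" for h
  proof -
    have "ev ?I (r3 0 N 0) (t h) = 0"
      using sem_eq[OF ab[rule_format, OF conjI[OF that]], where x=0 and y=N and z=0] by simp
    moreover have "wf ar3 (t h)" using tt2 that by (auto simp: ternary_def)
    ultimately show ?thesis unfolding v_def u_def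
      using edgeR[OF cl N1] by auto
  qed
  have cl2: "2 \<le> h \<longrightarrow> h \<le> N - 2 \<longrightarrow> u h \<le> h - 1" for h
  proof (induction h)
    case 0 then show ?case by simp
  next
    case (Suc h)
    show ?case
    proof (cases "h \<le> 1")
      case True then show ?thesis using pa pb pm by (auto simp: le_Suc_eq numeral_2_eq_2)
    next
      case False then show ?thesis using Suc st[of h] ed[of h] by auto
    qed
  qed
  have e1: "u (N - 2) \<le> N - 2 - 1" using cl2[of "N - 2"] N by auto
  have e2: "v (N - 2) \<le> u (N - 2) + 1" using ed[of "N - 2"] N by auto
  have "v (N - 2) \<le> N - 2" using e1 e2 N by linarith
  then show False using qa qb qm N by auto
qed

lemma alvin_neg: assumes cl: "close A B"
  shows "\<not> directed_alvin_heads ar3 (Th ar3 (opI N A B) N) N"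
  using th_neg[OF cl, of N] unfolding directed_alvin_heads_def two_headed_directed_gumm_def by blast



definition tm :: "nat \<Rightarrow> trm" where "tm h = F h [V 0, V 1, V 2]"

lemma tern_tm: "ternary ar3 (tm h)" by (auto simp: ternary_def tm_def)

lemma ev_tm: "ev (opI N A B) \<rho> (app3 (tm h) a b c) = op N (A h) (B h) (ev (opI N A B) \<rho> a) (ev (opI N A B) \<rho> b) (ev (opI N A B) \<rho> c)"
  by (simp add: tm_def app3_def opI_def)

lemma wf_app3_tm: "wf ar3 (app3 (tm h) (V i) (V j) (V k))" by (simp add: tm_def app3_def)

lemma derivI: assumes "wf ar3 s" "wf ar3 t" "\<And>\<rho>. (\<forall>i. \<rho> i \<le> N) \<Longrightarrow> ev (opI N A B) \<rho> s = ev (opI N A B) \<rho> t"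
  shows "deriv ar3 (Th ar3 (opI N A B) N) s t"
  using assms deriv_iff[OF clo_opI] by blast

lemma dd_pos: assumes n: "2 \<le> n"
  shows "directed_distributive ar3 (Th ar3 (opI (n - 1) (\<lambda>h. h) (\<lambda>h. h - 1)) (n - 1)) n"
  unfolding directed_distributive_def
proof (intro exI[of _ tm] conjI allI impI)
  let ?N = "n - 1"
  show "ternary ar3 (tm h)" for h by (rule tern_tm)
  show "deriv ar3 (Th ar3 (opI ?N (\<lambda>h. h) (\<lambda>h. h - 1)) ?N) (app3 (tm 0) vx vy vz) vx"
    by (rule derivI) (auto simp: wf_app3_tm ev_tm op_pp pp_0)
  show "deriv ar3 (Th ar3 (opI ?N (\<lambda>h. h) (\<lambda>h. h - 1)) ?N) (app3 (tm n) vx vy vz) vz"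
    by (rule derivI) (auto simp: wf_app3_tm ev_tm op_pp pp_N)
  show "deriv ar3 (Th ar3 (opI ?N (\<lambda>h. h) (\<lambda>h. h - 1)) ?N) (app3 (tm h) vx vy vx) vx" for h
    by (rule derivI) (auto simp: wf_app3_tm ev_tm)
  show "deriv ar3 (Th ar3 (opI ?N (\<lambda>h. h) (\<lambda>h. h - 1)) ?N) (app3 (tm h) vx vz vz) (app3 (tm (Suc h)) vx vx vz)" for h
    by (rule derivI) (auto simp: wf_app3_tm ev_tm op_xzz op_xxz)
qed

lemma gumm_pos: assumes n: "2 \<le> n"
  shows "gumm ar3 (Th ar3 (opI (n - 1) (\<lambda>h. if even h then h else h - 1) (\<lambda>h. if odd h then h else h - 1)) (n - 1)) n"
  unfolding gumm_def
proof (intro exI[of _ tm] conjI allI impI)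
  let ?N = "n - 1" and ?A = "\<lambda>h::nat. if even h then h else h - 1" and ?B = "\<lambda>h::nat. if odd h then h else h - 1"
  show "ternary ar3 (tm h)" for h by (rule tern_tm)
  show "deriv ar3 (Th ar3 (opI ?N ?A ?B) ?N) (app3 (tm 0) vx vy vz) vx"
    by (rule derivI) (auto simp: wf_app3_tm ev_tm op_pp pp_0)
  show "deriv ar3 (Th ar3 (opI ?N ?A ?B) ?N) (app3 (tm n) vx vy vz) vz"
    by (rule derivI) (auto simp: wf_app3_tm ev_tm op_pp pp_N)
  show "deriv ar3 (Th ar3 (opI ?N ?A ?B) ?N) (app3 (tm h) vx vy vx) vx" for h
    by (rule derivI) (auto simp: wf_app3_tm ev_tm)
  show "deriv ar3 (Th ar3 (opI ?N ?A ?B) ?N) (app3 (tm h) vx vz vz) (app3 (tm (Suc h)) vx vz vz)"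
    if "h < n" "even h" for h
    by (rule derivI) (use that in \<open>auto simp: wf_app3_tm ev_tm op_xzz\<close>)
  show "deriv ar3 (Th ar3 (opI ?N ?A ?B) ?N) (app3 (tm h) vx vx vz) (app3 (tm (Suc h)) vx vx vz)"
    if "h < n" "odd h" for h
    by (rule derivI) (use that in \<open>auto simp: wf_app3_tm ev_tm op_xxz\<close>)
qed

definition Aa :: "nat \<Rightarrow> nat \<Rightarrow> nat" where
  "Aa n h = (if h = 0 then 0 else if h = n - 1 then n - 2 else h)"
definition Ba :: "nat \<Rightarrow> nat \<Rightarrow> nat" where
  "Ba n h = (if h = 0 then 1 else if h = n - 1 then n - 1 else h - 1)"

lemma alvin_pos: assumes n: "4 \<le> n"
  shows "directed_alvin_heads ar3 (Th ar3 (opI (n - 1) (Aa n) (Ba n)) (n - 1)) n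
       \<and> two_headed_directed_gumm ar3 (Th ar3 (opI (n - 1) (Aa n) (Ba n)) (n - 1)) n"
proof -
  let ?N = "n - 1" let ?T = "Th ar3 (opI ?N (Aa n) (Ba n)) ?N"
  have T: "two_headed_gumm_terms ar3 ?T n (tm 0) tm (tm (n - 1))"
    unfolding two_headed_gumm_terms_def
  proof (intro conjI allI impI)
    show "ternary ar3 (tm 0)" "ternary ar3 (tm (n - 1))" "ternary ar3 (tm h)" for h by (rule tern_tm)+
    show "deriv ar3 ?T (app3 (tm h) vx vy vx) vx" for h
      by (rule derivI) (auto simp: wf_app3_tm ev_tm)
    show "deriv ar3 ?T (app3 (tm 0) vx vz vz) vx"
      by (rule derivI) (auto simp: wf_app3_tm ev_tm op_xzz Aa_def pp_0)
    show "deriv ar3 ?T (app3 (tm 0) vx vx vz) (app3 (tm 2) vx vx vz)"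
      by (rule derivI) (use n in \<open>auto simp: wf_app3_tm ev_tm op_xxz Ba_def\<close>)
    show "deriv ar3 ?T (app3 (tm h) vx vz vz) (app3 (tm (Suc h)) vx vx vz)" if "2 \<le> h \<and> h < n - 2" for h
      by (rule derivI) (use n that in \<open>auto simp: wf_app3_tm ev_tm op_xxz op_xzz Aa_def Ba_def\<close>)
    show "deriv ar3 ?T (app3 (tm (n - 2)) vx vz vz) (app3 (tm (n - 1)) vx vz vz)"
      by (rule derivI) (use n in \<open>auto simp: wf_app3_tm ev_tm op_xzz Aa_def\<close>)
    show "deriv ar3 ?T (app3 (tm (n - 1)) vx vx vz) vz"
      by (rule derivI) (use n in \<open>auto simp: wf_app3_tm ev_tm op_xxz Ba_def pp_N\<close>)
  qed
  have "deriv ar3 ?T (app3 (tm 0) vx vy vx) vx" "deriv ar3 ?T (app3 (tm (n - 1)) vx vy vx) vx"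
    by (rule derivI; auto simp: wf_app3_tm ev_tm)+
  then show ?thesis using T n unfolding directed_alvin_heads_def two_headed_directed_gumm_def by blast
qed



theorem corollary8p11:
  shows "(\<forall>n\<ge>2. \<exists>ar \<Sigma>. variety ar \<Sigma> \<and> locally_finite ar \<Sigma> \<and>
            gumm ar \<Sigma> n \<and> \<not> gumm ar \<Sigma> (n - 1))
       \<and> (\<forall>n\<ge>2. \<exists>ar \<Sigma>. variety ar \<Sigma> \<and> locally_finite ar \<Sigma> \<and>
            directed_distributive ar \<Sigma> n \<and> \<not> directed_distributive ar \<Sigma> (n - 1))
       \<and> (\<forall>n\<ge>4. \<exists>ar \<Sigma>. variety ar \<Sigma> \<and> locally_finite ar \<Sigma> \<and>
            directed_alvin_heads ar \<Sigma> n \<and> two_headed_directed_gumm ar \<Sigma> n \<and>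
            \<not> directed_alvin_heads ar \<Sigma> (n - 1) \<and> \<not> two_headed_directed_gumm ar \<Sigma> (n - 1))"
proof (intro conjI allI impI)
  fix n :: nat assume n: "2 \<le> n"
  let ?A = "\<lambda>h::nat. if even h then h else h - 1" and ?B = "\<lambda>h::nat. if odd h then h else h - 1"
  have cl: "close ?A ?B" by (auto simp: close_def)
  show "\<exists>ar \<Sigma>. variety ar \<Sigma> \<and> locally_finite ar \<Sigma> \<and> gumm ar \<Sigma> n \<and> \<not> gumm ar \<Sigma> (n - 1)"
    using variety_Th lf_Th[OF clo_opI] gumm_pos[OF n] gumm_neg[OF cl, of "n - 1"] n by fastforce
next
  fix n :: nat assume n: "2 \<le> n"
  have cl: "close (\<lambda>h::nat. h) (\<lambda>h. h - 1)" by (auto simp: close_def)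
  show "\<exists>ar \<Sigma>. variety ar \<Sigma> \<and> locally_finite ar \<Sigma> \<and> directed_distributive ar \<Sigma> n \<and> \<not> directed_distributive ar \<Sigma> (n - 1)"
    using variety_Th lf_Th[OF clo_opI] dd_pos[OF n] dd_neg[OF cl, of "n - 1"] n by fastforce
next
  fix n :: nat assume n: "4 \<le> n"
  have cl: "close (Aa n) (Ba n)" using n by (auto simp: close_def Aa_def Ba_def)
  show "\<exists>ar \<Sigma>. variety ar \<Sigma> \<and> locally_finite ar \<Sigma> \<and>
            directed_alvin_heads ar \<Sigma> n \<and> two_headed_directed_gumm ar \<Sigma> n \<and>
            \<not> directed_alvin_heads ar \<Sigma> (n - 1) \<and> \<not> two_headed_directed_gumm ar \<Sigma> (n - 1)"
    using variety_Th lf_Th[OF clo_opI] alvin_pos[OF n] alvin_neg[OF cl, of "n - 1"] th_neg[OF cl, of "n - 1"] by blast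
qed

end
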